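(* Let $M$ be a finite-horizon reward-free MDP, $\Pi\subseteq\Pi_{\mathrm{RNS}}$, $h\in[H]$, and let $\mu\in\Delta(\mathcal{X}\times\mathcal{A})$ with $C_\infty\equiv C^M_{\infty;h}(\mu)$. Then for all $p\in\Delta(\Pi_{\mathrm{RNS}})$, $$\Psi^M_{h,\varepsilon}(p)\le 2C_\infty\cdot\Psi^M_{\mu;h,\varepsilon}(p).$$ Furthermore, $\mathsf{Cov}^M_{\mu;h,\varepsilon}\le 1$ for all $\varepsilon>0$.
   Context: Episodic reward-free MDP $M$ (countable states $\mathcal{X}$, actions $\mathcal{A}$, horizon $H$); $\Pi_{\mathrm{RNS}}$ randomized non-stationary policies; $d^{M,\pi}_h(x,a)$ the layer-$h$ state-action occupancy of $\pi$, and $d^{M,p}_h=\mathbb{E}_{\pi\sim p}d^{M,\pi}_h$ for mixtures $p$. Definitions: $\Psi^M_{h,\varepsilon}(p)=\sup_{\pi\in\Pi}\mathbb{E}^{M,\pi}\big[\frac{d^{M,\pi}_h(x_h,a_h)}{d^{M,p}_h(x_h,a_h)+\varepsilon d^{M,\pi}_h(x_h,a_h)}\big]$; $C^M_{\infty;h}(\mu)=\sup_{\pi\in\Pi}\sup_{(x,a)}\frac{d^{M,\pi}_h(x,a)}{\mu(x,a)}$; $\Psi^M_{\mu;h,\varepsilon}(p)=\sup_{\pi\in\Pi}\mathbb{E}^{M,\pi}\big[\frac{\mu(x_h,a_h)}{d^{M,p}_h(x_h,a_h)+\varepsilon C_\infty\mu(x_h,a_h)}\big]$ with $C_\infty=C^M_{\infty;h}(\mu)$;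 $\mathsf{Cov}^M_{\mu;h,\varepsilon}=\inf_{p\in\Delta(\Pi)}\Psi^M_{\mu;h,\varepsilon}(p)$. *)

theory Defs
  imports "HOL-Probability.Probability"
begin

text \<open>Layers are numbered 1..H. The initial state x_1 is drawn from mdp_init;
  at layer k, after playing a_k in x_k, the next state is drawn from mdp_trans M k x_k a_k.\<close>
record ('x, 'a) mdp =
  mdp_init  :: "'x pmf"
  mdp_trans :: "nat \<Rightarrow> 'x \<Rightarrow> 'a \<Rightarrow> 'x pmf"
  mdp_horizon :: nat

type_synonym ('x, 'a) policy = "nat \<Rightarrow> 'x \<Rightarrow> 'a pmf"

text \<open>state_dist M pi n is the law of the state at layer n+1 under pi.\<close>
primrec state_dist :: "('x, 'a) mdp \<Rightarrow> ('x, 'a) policy \<Rightarrow> nat \<Rightarrow> 'x pmf" where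
  "state_dist M \<pi> 0 = mdp_init M"
| "state_dist M \<pi> (Suc n) =
     bind_pmf (state_dist M \<pi> n)
       (\<lambda>x. bind_pmf (\<pi> (Suc n) x) (\<lambda>a. mdp_trans M (Suc n) x a))"

text \<open>Law of the layer-h state-action pair (x_h, a_h) under pi (h \<ge> 1).\<close>
definition sa_dist :: "('x, 'a) mdp \<Rightarrow> ('x, 'a) policy \<Rightarrow> nat \<Rightarrow> ('x \<times> 'a) pmf" where
  "sa_dist M \<pi> h = bind_pmf (state_dist M \<pi> (h - 1)) (\<lambda>x. map_pmf (\<lambda>a. (x, a)) (\<pi> h x))"

definition occ :: "('x, 'a) mdp \<Rightarrow> ('x, 'a) policy \<Rightarrow> nat \<Rightarrow> 'x \<times> 'a \<Rightarrow> real" where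
  "occ M \<pi> h xa = pmf (sa_dist M \<pi> h) xa"

definition occ_mix :: "('x, 'a) mdp \<Rightarrow> ('x, 'a) policy pmf \<Rightarrow> nat \<Rightarrow> 'x \<times> 'a \<Rightarrow> real" where
  "occ_mix M p h xa = measure_pmf.expectation p (\<lambda>\<pi>. occ M \<pi> h xa)"

definition expect_h :: "('x, 'a) mdp \<Rightarrow> ('x, 'a) policy \<Rightarrow> nat \<Rightarrow> ('x \<times> 'a \<Rightarrow> real) \<Rightarrow> real" where
  "expect_h M \<pi> h f = measure_pmf.expectation (sa_dist M \<pi> h) f"

definition Psi :: "('x, 'a) mdp \<Rightarrow> ('x, 'a) policy set \<Rightarrow> nat \<Rightarrow> real \<Rightarrow> ('x, 'a) policy pmf \<Rightarrow> real" where
  "Psi M Pol h eps p = (SUP \<pi>\<in>Pol. expect_h M \<pi> h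
      (\<lambda>xa. occ M \<pi> h xa / (occ_mix M p h xa + eps * occ M \<pi> h xa)))"

definition ratio :: "real \<Rightarrow> real \<Rightarrow> ereal" where
  "ratio d m = (if m = 0 then (if d = 0 then 0 else \<infinity>) else ereal (d / m))"

definition Cinf :: "('x, 'a) mdp \<Rightarrow> ('x, 'a) policy set \<Rightarrow> nat \<Rightarrow> ('x \<times> 'a) pmf \<Rightarrow> ereal" where
  "Cinf M Pol h \<mu> = (SUP \<pi>\<in>Pol. SUP xa. ratio (occ M \<pi> h xa) (pmf \<mu> xa))"

text \<open>Psi^M_{mu;h,eps}(p), using C_infty = Cinf M Pi h mu (assumed finite where used).\<close>
definition Psi_mu :: "('x, 'a) mdp \<Rightarrow> ('x, 'a) policy set \<Rightarrow> nat \<Rightarrow> ('x \<times> 'a) pmf \<Rightarrow> real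
    \<Rightarrow> ('x, 'a) policy pmf \<Rightarrow> real" where
  "Psi_mu M Pol h \<mu> eps p = (SUP \<pi>\<in>Pol. expect_h M \<pi> h
      (\<lambda>xa. pmf \<mu> xa / (occ_mix M p h xa + eps * real_of_ereal (Cinf M Pol h \<mu>) * pmf \<mu> xa)))"

definition Cov_mu :: "('x, 'a) mdp \<Rightarrow> ('x, 'a) policy set \<Rightarrow> nat \<Rightarrow> ('x \<times> 'a) pmf \<Rightarrow> real \<Rightarrow> real" where
  "Cov_mu M Pol h \<mu> eps = (INF p\<in>{p. set_pmf p \<subseteq> Pol}. Psi_mu M Pol h \<mu> eps p)"

end

theory Submission
  imports Defs
begin

lemma pmf_integral_count:
  fixes f :: "'k::countable \<Rightarrow> real"
  shows "integral\<^sup>L (measure_pmf P) f = integral\<^sup>L (count_space UNIV) (\<lambda>k. pmf P k * f k)"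
  by (simp add: measure_pmf_eq_density integral_density)

lemma integrable_pmf_bdd:
  fixes f :: "'k \<Rightarrow> real"
  assumes "\<And>k. k \<in> set_pmf P \<Longrightarrow> \<bar>f k\<bar> \<le> B"
  shows "integrable (measure_pmf P) f"
  by (rule measure_pmf.integrable_const_bound[where B=B]) (auto intro!: AE_pmfI assms)

lemma ln_diff_eq:
  fixes m K a c :: real
  assumes "m > 0" "K > 0" "0 \<le> a" "0 \<le> c"
  shows "ln (1 + a/(K*m)) - ln (1 + c/(K*m)) = ln (1 + (a - c)/(K*m + c))"
proof -
  have p: "K*m > 0" using assms by simp
  have p': "K*m \<noteq> 0" using assms by simp
  have pa: "K*m + a > 0" and pc: "K*m + c > 0" using p assms by linarith+
  have "1 + a/(K*m) = (K*m+a)/(K*m)" "1 + c/(K*m) = (K*m+c)/(K*m)" using p' by (simp_all add: field_simps)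
  moreover have "1 + (a - c)/(K*m + c) = (K*m+a)/(K*m+c)"
    using pc by (simp add: field_simps)
  ultimately have "ln (1 + a/(K*m)) - ln (1 + c/(K*m)) = ln ((K*m+a)/(K*m)) - ln ((K*m+c)/(K*m))"
     "ln (1 + (a - c)/(K*m + c)) = ln ((K*m+a)/(K*m+c))" by simp_all
  moreover have "ln ((K*m+a)/(K*m)) = ln (K*m+a) - ln (K*m)" using pa p by (rule ln_divide_pos)
  moreover have "ln ((K*m+c)/(K*m)) = ln (K*m+c) - ln (K*m)" using pc p by (rule ln_divide_pos)
  moreover have "ln ((K*m+a)/(K*m+c)) = ln (K*m+a) - ln (K*m+c)" using pa pc by (rule ln_divide_pos)
  ultimately show ?thesis by simp
qed

lemma mix_bound:
  fixes d D C e m :: real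
  assumes "0 \<le> d" "d \<le> C*m" "0 \<le> D" "e > 0" "C > 0" "0 \<le> m"
  shows "d / (D + e*d) \<le> C * (m / (D + e*C*m))"
proof (cases "d = 0")
  case True then show ?thesis using assms by simp
next
  case False
  then have "d > 0" using assms by simp
  then have "m > 0" using assms by (cases "m = 0") auto
  have den1: "D + e*d > 0" using \<open>d>0\<close> assms by (simp add: add_nonneg_pos)
  have den2: "D + e*C*m > 0" using \<open>m>0\<close> assms by (simp add: add_nonneg_pos)
  have "d * (D + e*C*m) \<le> C*m * (D + e*d)"
  proof -
    have "d * D \<le> C*m*D" using assms mult_right_mono by blast
    then show ?thesis by (simp add: algebra_simps)
  qed
  then show ?thesis using den1 den2 by (simp add: divide_simps mult.commute mult.left_commute)
qed

lemma cov_abstract: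
  fixes oc :: "'p \<Rightarrow> 'k::countable \<Rightarrow> real" and \<mu> :: "'k pmf" and Pol :: "'p set"
  assumes Pne: "Pol \<noteq> {}"
    and o_nn: "\<And>\<pi> k. 0 \<le> oc \<pi> k" and o_le1: "\<And>\<pi> k. oc \<pi> k \<le> 1"
    and dom: "\<And>\<pi> k. \<pi> \<in> Pol \<Longrightarrow> oc \<pi> k \<le> C * pmf \<mu> k"
    and Cpos: "C > 0" and epos: "e > 0" and etapos: "\<eta> > 0"
  shows "\<exists>p. set_pmf p \<subseteq> Pol \<and> (\<forall>\<pi>\<in>Pol.
      (\<integral>k. oc \<pi> k / ((\<integral>\<pi>'. oc \<pi>' k \<partial>p) + e*C*pmf \<mu> k) \<partial>\<mu>) \<le> 1 + \<eta>)"
proof -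
  define D where "D p k = (\<integral>\<pi>. oc \<pi> k \<partial>measure_pmf p)" for p k
  define K where "K = e*C"
  define S where "S = {p. set_pmf p \<subseteq> Pol}"
  have Kpos: "K > 0" using Cpos epos by (simp add: K_def)
  have D_nn: "0 \<le> D p k" for p k unfolding D_def by (simp add: o_nn)
  have int_oc: "integrable (measure_pmf p) (\<lambda>\<pi>. oc \<pi> k)" for p k
    by (rule integrable_pmf_bdd[where B=1]) (simp add: o_nn o_le1)
  have D_le: "D p k \<le> C * pmf \<mu> k" if "p \<in> S" for p k
    unfolding D_def
    by (rule measure_pmf.integral_le_const[OF int_oc], rule AE_pmfI)
       (use that dom in \<open>auto simp: S_def\<close>)
  define F where "F p = (\<integral>k. ln (1 + D p k / (K * pmf \<mu> k)) \<partial>\<mu>)" for p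
  define B where "B = ln (1 + 1/e)"
  have Fint_bd: "0 \<le> ln (1 + D p k / (K * pmf \<mu> k)) \<and> ln (1 + D p k / (K * pmf \<mu> k)) \<le> B"
    if "p \<in> S" "k \<in> set_pmf \<mu>" for p k
  proof -
    have m: "pmf \<mu> k > 0" using that by (simp add: pmf_positive)
    have "D p k / (K * pmf \<mu> k) \<le> 1/e"
    proof -
      have "D p k * e \<le> C * pmf \<mu> k * e" using D_le[OF that(1)] epos by simp
      then show ?thesis using m epos Kpos Cpos by (simp add: K_def divide_simps mult.commute mult.left_commute)
    qed
    moreover have "0 \<le> D p k / (K * pmf \<mu> k)" using D_nn m Kpos by simp
    ultimately show ?thesis unfolding B_def using epos by (simp)
  qed
  have Fint: "integrable (measure_pmf \<mu>) (\<lambda>k. ln (1 + D p k / (K * pmf \<mu> k)))" if "p \<in> S" for p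
    by (rule integrable_pmf_bdd[where B=B]) (use Fint_bd[OF that] in auto)
  have F_le: "F p \<le> B" if "p \<in> S" for p
    unfolding F_def
    by (rule measure_pmf.integral_le_const[OF Fint[OF that]], rule AE_pmfI) (use Fint_bd[OF that] in auto)
  obtain \<pi>0 where "\<pi>0 \<in> Pol" using Pne by auto
  then have Sne: "S \<noteq> {}" unfolding S_def by (auto intro!: exI[of _ "return_pmf \<pi>0"])
  have bdd: "bdd_above (F ` S)" using F_le by (auto intro!: bdd_aboveI)
  define t where "t = min 1 (min (e/2) (\<eta>*e^2/4))"
  have tpos: "t > 0" using epos etapos by (simp add: t_def)
  have t1: "t \<le> 1" "t \<le> e/2" "t \<le> \<eta>*e^2/4" by (simp_all add: t_def)
  define \<delta> where "\<delta> = \<eta>*t/2"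
  have \<delta>pos: "\<delta> > 0" using tpos etapos by (simp add: \<delta>_def)
  obtain p where pS: "p \<in> S" and pF: "(SUP q\<in>S. F q) - \<delta> < F p"
    using less_cSUP_iff[OF Sne bdd, of "(SUP q\<in>S. F q) - \<delta>"] \<delta>pos by auto
  show ?thesis
  proof (intro exI conjI ballI)
    show "set_pmf p \<subseteq> Pol" using pS by (simp add: S_def)
    fix \<pi> assume \<pi>P: "\<pi> \<in> Pol"
    define q where "q = bind_pmf (bernoulli_pmf t) (\<lambda>b. if b then return_pmf \<pi> else p)"
    have qS: "q \<in> S" using pS \<pi>P tpos t1 by (auto simp: S_def q_def split: if_splits)
    have Dq: "D q k = t * oc \<pi> k + (1-t) * D p k" for k
    proof -
      have e1: "(\<integral>\<^sup>+\<pi>'. ennreal (oc \<pi>' k) \<partial>r) = ennreal (D r k)" for r :: "'p pmf"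
        unfolding D_def by (rule nn_integral_eq_integral[OF int_oc]) (simp add: o_nn)
      have "ennreal (D q k) = (\<integral>\<^sup>+\<pi>'. ennreal (oc \<pi>' k) \<partial>q)" by (rule e1[symmetric])
      also have "\<dots> = (\<integral>\<^sup>+b. (\<integral>\<^sup>+\<pi>'. ennreal (oc \<pi>' k) \<partial>(if b then return_pmf \<pi> else p)) \<partial>bernoulli_pmf t)"
        unfolding q_def by (rule nn_integral_bind_pmf)
      also have "\<dots> = (\<integral>\<^sup>+\<pi>'. ennreal (oc \<pi>' k) \<partial>return_pmf \<pi>) * ennreal t + (\<integral>\<^sup>+\<pi>'. ennreal (oc \<pi>' k) \<partial>p) * ennreal (1 - t)"
        by (subst nn_integral_bernoulli_pmf) (use tpos t1 in auto)
      also have "\<dots> = ennreal (oc \<pi> k) * ennreal t + ennreal (D p k) * ennreal (1 - t)"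
        by (simp add: e1[of p]) 
      also have "\<dots> = ennreal (oc \<pi> k * t + D p k * (1 - t))"
      proof -
        have a1: "0 \<le> oc \<pi> k * t" "0 \<le> D p k * (1 - t)" using tpos t1 o_nn[of \<pi> k] D_nn[of p k] by simp_all
        have "ennreal (oc \<pi> k * t + D p k * (1 - t)) = ennreal (oc \<pi> k * t) + ennreal (D p k * (1 - t))"
          by (rule ennreal_plus[OF a1])
        also have "\<dots> = ennreal (oc \<pi> k) * ennreal t + ennreal (D p k) * ennreal (1 - t)"
          using ennreal_mult''[of t "oc \<pi> k"] ennreal_mult''[of "1-t" "D p k"] tpos t1 by simp
        finally show ?thesis by simp
      qed
      finally have "ennreal (D q k) = ennreal (oc \<pi> k * t + D p k * (1 - t))" .
      then have "D q k = oc \<pi> k * t + D p k * (1 - t)"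
        using tpos t1 o_nn[of \<pi> k] D_nn[of q k] D_nn[of p k] by (subst (asm) ennreal_inj) auto
      then show ?thesis by (simp add: mult.commute)
    qed
    have Fq: "F q \<le> (SUP q\<in>S. F q)" using qS bdd by (rule cSUP_upper)
    have FqFp: "F q - F p < \<delta>" using Fq pF by linarith
    define r where "r k = (oc \<pi> k - D p k)/(K*pmf \<mu> k + D p k)" for k
    define x where "x k = t * r k" for k
    define G where "G = (\<integral>k. r k \<partial>\<mu>)"
    have pw: "\<bar>r k\<bar> \<le> 1/e \<and> \<bar>x k\<bar> \<le> t/e \<and>
        ln (1 + D q k/(K*pmf \<mu> k)) - ln (1 + D p k/(K*pmf \<mu> k)) = ln (1 + x k) \<and>
        x k - 2*(t/e)^2 \<le> ln (1 + x k) \<and>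
        oc \<pi> k / (D p k + e*C*pmf \<mu> k) = r k + D p k/(K*pmf \<mu> k + D p k) \<and>
        0 \<le> D p k/(K*pmf \<mu> k + D p k) \<and> D p k/(K*pmf \<mu> k + D p k) \<le> 1"
      if "k \<in> set_pmf \<mu>" for k
    proof -
      define m where "m = pmf \<mu> k"
      have m: "m > 0" using that by (simp add: pmf_positive m_def)
      have oc1: "0 \<le> oc \<pi> k" "oc \<pi> k \<le> C*m" using o_nn dom[OF \<pi>P] by (auto simp: m_def)
      have D1: "0 \<le> D p k" "D p k \<le> C*m" using D_nn D_le[OF pS] by (auto simp: m_def)
      have Km: "K*m > 0" using Kpos m by simp
      have den: "K*m + D p k > 0" using Km D1 by linarith
      have absdiff: "\<bar>oc \<pi> k - D p k\<bar> \<le> C*m" using oc1 D1 by linarith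
      have "\<bar>r k\<bar> = \<bar>oc \<pi> k - D p k\<bar> / (K*m + D p k)" using den by (simp add: r_def m_def abs_div)
      also have "\<dots> \<le> C*m / (K*m)" 
        by (rule frac_le) (use absdiff Km D1 in auto)
      also have "\<dots> = 1/e" using Cpos m epos by (simp add: K_def)
      finally have rb: "\<bar>r k\<bar> \<le> 1/e" .
      have xb: "\<bar>x k\<bar> \<le> t/e" using rb tpos
        by (simp add: x_def abs_mult) (metis divide_inverse mult_left_mono less_imp_le mult_1_right times_divide_eq_right)
      have lnd: "ln (1 + D q k/(K*m)) - ln (1 + D p k/(K*m)) = ln (1 + x k)"
      proof -
        have "ln (1 + D q k/(K*m)) - ln (1 + D p k/(K*m)) = ln (1 + (D q k - D p k)/(K*m + D p k))"
          by (rule ln_diff_eq) (use m Kpos D_nn in auto)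
        moreover have "(D q k - D p k)/(K*m + D p k) = x k"
          by (simp add: Dq x_def r_def m_def algebra_simps)
        ultimately show ?thesis by simp
      qed
      have "t/e \<le> 1/2" using t1 epos by (simp add: divide_simps)
      then have xh: "\<bar>x k\<bar> \<le> 1/2" using xb by linarith
      have "(x k)^2 \<le> (t/e)^2"
        using xb by (metis abs_ge_zero power2_abs power_mono)
      then have lb: "x k - 2*(t/e)^2 \<le> ln (1 + x k)"
        using abs_ln_one_plus_x_minus_x_bound[OF xh] by linarith
      have split: "oc \<pi> k / (D p k + e*C*m) = r k + D p k/(K*m + D p k)"
        using den by (simp add: r_def m_def K_def add_divide_distrib[symmetric] add.commute)
      have "0 \<le> D p k/(K*m + D p k)" "D p k/(K*m + D p k) \<le> 1" using den D1 Km by auto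
      then show ?thesis using rb xb lnd lb split by (simp add: m_def)
    qed
    have ir: "integrable (measure_pmf \<mu>) r"
      by (rule integrable_pmf_bdd[where B="1/e"]) (use pw in auto)
    have iDD: "integrable (measure_pmf \<mu>) (\<lambda>k. D p k/(K*pmf \<mu> k + D p k))"
      by (rule integrable_pmf_bdd[where B=1]) (metis (no_types, lifting) pw abs_of_nonneg)
    have ix: "integrable (measure_pmf \<mu>) (\<lambda>k. x k - 2*(t/e)^2)"
      unfolding x_def using ir by simp
    have "F q - F p = (\<integral>k. ln (1 + D q k/(K*pmf \<mu> k)) - ln (1 + D p k/(K*pmf \<mu> k)) \<partial>\<mu>)"
      unfolding F_def by (rule Bochner_Integration.integral_diff[symmetric, OF Fint[OF qS] Fint[OF pS]])
    also have "\<dots> \<ge> (\<integral>k. x k - 2*(t/e)^2 \<partial>\<mu>)"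
      by (rule integral_mono_AE[OF ix]) (use Fint[OF qS] Fint[OF pS] pw in \<open>auto intro!: AE_pmfI\<close>)
    moreover have "(\<integral>k. x k - 2*(t/e)^2 \<partial>\<mu>) = t * G - 2*(t/e)^2"
      using ir by (simp add: x_def G_def)
    ultimately have "t * G - 2*(t/e)^2 < \<delta>" using FqFp by linarith
    moreover have "t * (\<eta>/2 + 2*t/e^2) = \<delta> + 2*(t/e)^2" using epos
      by (simp add: \<delta>_def power2_eq_square field_simps)
    ultimately have "t * G < t * (\<eta>/2 + 2*t/e^2)" by linarith
    then have "G < \<eta>/2 + 2*t/e^2" using tpos by simp
    moreover have "2*t/e^2 \<le> \<eta>/2" using t1 epos by (simp add: divide_simps)
    ultimately have Gb: "G < \<eta>" by linarith
    have "(\<integral>k. oc \<pi> k / (D p k + e*C*pmf \<mu> k) \<partial>\<mu>) = (\<integral>k. r k + D p k/(K*pmf \<mu> k + D p k) \<partial>\<mu>)"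
      by (rule integral_cong_AE) (use pw in \<open>auto intro!: AE_pmfI\<close>)
    also have "\<dots> = G + (\<integral>k. D p k/(K*pmf \<mu> k + D p k) \<partial>\<mu>)"
      using ir iDD by (simp add: G_def)
    also have "(\<integral>k. D p k/(K*pmf \<mu> k + D p k) \<partial>\<mu>) \<le> 1"
      by (rule measure_pmf.integral_le_const[OF iDD], rule AE_pmfI) (use pw in auto)
    finally show "(\<integral>k. oc \<pi> k / ((\<integral>\<pi>'. oc \<pi>' k \<partial>p) + e*C*pmf \<mu> k) \<partial>\<mu>) \<le> 1 + \<eta>"
      using Gb by (simp add: D_def)
  qed
qed

lemma frac_bnd:
  fixes a D c :: real
  assumes "0 \<le> a" "0 \<le> D" "c > 0"
  shows "0 \<le> a/(D + c*a) \<and> a/(D + c*a) \<le> 1/c"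
proof (cases "a = 0")
  case True then show ?thesis using assms by simp
next
  case False
  then have a: "a > 0" using assms by simp
  have "c*a > 0" using a assms by simp
  then have "a/(D + c*a) \<le> a/(c*a)" using assms by (intro divide_left_mono) auto
  also have "\<dots> = 1/c" using a by simp
  finally show ?thesis using assms by simp
qed

theorem proposition4p1:
  fixes M :: "('x::countable, 'a::countable) mdp"
    and Pol :: "('x, 'a) policy set"
    and h :: nat
    and \<mu> :: "('x \<times> 'a) pmf"
  assumes "Pol \<noteq> {}"
    and "h \<in> {1..mdp_horizon M}"
    and "Cinf M Pol h \<mu> < \<infinity>"
  shows "(\<forall>eps>0. \<forall>p :: ('x, 'a) policy pmf.
            Psi M Pol h eps p \<le> 2 * real_of_ereal (Cinf M Pol h \<mu>) * Psi_mu M Pol h \<mu> eps p)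
       \<and> (\<forall>eps>0. Cov_mu M Pol h \<mu> eps \<le> 1)"
proof -
  note Pne = assms(1)
  define C where "C = real_of_ereal (Cinf M Pol h \<mu>)"
  have occ_nn: "0 \<le> occ M \<pi> h k" for \<pi> k by (simp add: occ_def)
  have occ_le1: "occ M \<pi> h k \<le> 1" for \<pi> k by (simp add: occ_def pmf_le_1)
  have ratio_nn: "0 \<le> ratio d m" if "0 \<le> d" "0 \<le> m" for d m :: real
    using that by (simp add: ratio_def)
  have ratio_le: "ratio (occ M \<pi> h k) (pmf \<mu> k) \<le> Cinf M Pol h \<mu>" if "\<pi> \<in> Pol" for \<pi> k
    unfolding Cinf_def by (rule SUP_upper2[OF that], rule SUP_upper) simp
  obtain \<pi>0 where \<pi>0: "\<pi>0 \<in> Pol" using Pne by auto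
  have Cinf_nn: "0 \<le> Cinf M Pol h \<mu>"
    using ratio_le[OF \<pi>0] ratio_nn occ_nn by (meson order_trans pmf_nonneg ereal_le_real_iff zero_ereal_def)
  have Cinf_eq: "Cinf M Pol h \<mu> = ereal C"
    using Cinf_nn assms(3) unfolding C_def by (cases "Cinf M Pol h \<mu>") auto
  have dom: "occ M \<pi> h k \<le> C * pmf \<mu> k" if "\<pi> \<in> Pol" for \<pi> k
  proof (cases "pmf \<mu> k = 0")
    case True
    have "occ M \<pi> h k = 0"
    proof (rule ccontr)
      assume "occ M \<pi> h k \<noteq> 0"
      then have "ratio (occ M \<pi> h k) (pmf \<mu> k) = \<infinity>" using True by (simp add: ratio_def)
      then show False using ratio_le[OF that, of k] Cinf_eq by simp
    qed
    then show ?thesis using True by simp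
  next
    case False
    then have m: "pmf \<mu> k > 0" using pmf_nonneg[of \<mu> k] by linarith
    have "ereal (occ M \<pi> h k / pmf \<mu> k) \<le> ereal C"
      using ratio_le[OF that, of k] Cinf_eq False by (simp add: ratio_def)
    then have "occ M \<pi> h k / pmf \<mu> k \<le> C" by simp
    then show ?thesis using m by (simp add: pos_divide_le_eq)
  qed
  have Cpos: "C > 0"
  proof -
    obtain k where k: "k \<in> set_pmf (sa_dist M \<pi>0 h)" using set_pmf_not_empty by fast
    then have "occ M \<pi>0 h k > 0" by (simp add: occ_def pmf_positive)
    then have "0 < C * pmf \<mu> k" using dom[OF \<pi>0, of k] by linarith
    then show ?thesis using pmf_nonneg[of \<mu> k] by (simp add: zero_less_mult_iff)
  qed
  have D_nn: "0 \<le> occ_mix M p h k" for p k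
    unfolding occ_mix_def by (simp add: occ_nn)
  define T2 where "T2 eps p \<pi> = expect_h M \<pi> h (\<lambda>xa. pmf \<mu> xa / (occ_mix M p h xa + eps * C * pmf \<mu> xa))"
    for eps p \<pi>
  have PsimuT: "Psi_mu M Pol h \<mu> eps p = (SUP \<pi>\<in>Pol. T2 eps p \<pi>)" for eps p
    unfolding Psi_mu_def T2_def C_def ..
  have g2b: "0 \<le> pmf \<mu> xa / (occ_mix M p h xa + eps * C * pmf \<mu> xa) \<and>
             pmf \<mu> xa / (occ_mix M p h xa + eps * C * pmf \<mu> xa) \<le> 1/(eps*C)" if "eps > 0" for eps p xa
    using frac_bnd[of "pmf \<mu> xa" "occ_mix M p h xa" "eps*C"] D_nn that Cpos by simp
  have g2i: "integrable (measure_pmf P) (\<lambda>xa. pmf \<mu> xa / (occ_mix M p h xa + eps * C * pmf \<mu> xa))"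
    if "eps > 0" for eps p and P :: "('x \<times> 'a) pmf"
    by (rule integrable_pmf_bdd[where B="1/(eps*C)"]) (metis g2b[OF that] abs_of_nonneg)
  have T2b: "0 \<le> T2 eps p \<pi> \<and> T2 eps p \<pi> \<le> 1/(eps*C)" if "eps > 0" for eps p \<pi>
  proof
    show "0 \<le> T2 eps p \<pi>" unfolding T2_def expect_h_def
      by (rule integral_nonneg_AE) (use g2b[OF that] in auto)
    show "T2 eps p \<pi> \<le> 1/(eps*C)" unfolding T2_def expect_h_def
      by (rule measure_pmf.integral_le_const[OF g2i[OF that]]) (use g2b[OF that] in auto)
  qed
  have bddT2: "bdd_above (T2 eps p ` Pol)" if "eps > 0" for eps p
    using T2b[OF that] by (auto intro!: bdd_aboveI)
  have T2le: "T2 eps p \<pi> \<le> Psi_mu M Pol h \<mu> eps p" if "eps > 0" "\<pi> \<in> Pol" for eps p \<pi>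
    unfolding PsimuT by (rule cSUP_upper[OF that(2) bddT2[OF that(1)]])
  have Psimu_nn: "0 \<le> Psi_mu M Pol h \<mu> eps p" if "eps > 0" for eps p
    using T2b[OF that, of p \<pi>0] T2le[OF that \<pi>0, of p] by linarith
  have part1: "Psi M Pol h eps p \<le> 2 * C * Psi_mu M Pol h \<mu> eps p" if eps: "eps > 0" for eps p
  proof -
    have "Psi M Pol h eps p \<le> C * Psi_mu M Pol h \<mu> eps p"
      unfolding Psi_def
    proof (rule cSUP_least[OF Pne])
      fix \<pi> assume \<pi>P: "\<pi> \<in> Pol"
      have g1i: "integrable (measure_pmf (sa_dist M \<pi> h)) (\<lambda>xa. occ M \<pi> h xa / (occ_mix M p h xa + eps * occ M \<pi> h xa))"
        by (rule integrable_pmf_bdd[where B="1/eps"])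
           (metis frac_bnd[OF occ_nn D_nn eps] abs_of_nonneg)
      have "expect_h M \<pi> h (\<lambda>xa. occ M \<pi> h xa / (occ_mix M p h xa + eps * occ M \<pi> h xa))
          \<le> expect_h M \<pi> h (\<lambda>xa. C * (pmf \<mu> xa / (occ_mix M p h xa + eps * C * pmf \<mu> xa)))"
        unfolding expect_h_def
        by (rule integral_mono[OF g1i integrable_mult_right[OF g2i[OF eps]]])
           (rule mix_bound[OF occ_nn dom[OF \<pi>P] D_nn eps Cpos pmf_nonneg])
      also have "\<dots> = C * T2 eps p \<pi>" unfolding expect_h_def T2_def by (rule integral_mult_right_zero)
      also have "\<dots> \<le> C * Psi_mu M Pol h \<mu> eps p"
        using T2le[OF eps \<pi>P] Cpos by simp
      finally show "expect_h M \<pi> h (\<lambda>xa. occ M \<pi> h xa / (occ_mix M p h xa + eps * occ M \<pi> h xa))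
          \<le> C * Psi_mu M Pol h \<mu> eps p" .
    qed
    also have "\<dots> \<le> 2 * C * Psi_mu M Pol h \<mu> eps p"
      using Psimu_nn[OF eps, of p] Cpos by (simp add: mult_right_mono)
    finally show ?thesis .
  qed
  have part2: "Cov_mu M Pol h \<mu> eps \<le> 1" if eps: "eps > 0" for eps
  proof (rule field_le_epsilon)
    fix \<eta> :: real assume \<eta>: "\<eta> > 0"
    obtain p where pS: "set_pmf p \<subseteq> Pol" and pb: "\<forall>\<pi>\<in>Pol.
      (\<integral>k. occ M \<pi> h k / ((\<integral>\<pi>'. occ M \<pi>' h k \<partial>p) + eps*C*pmf \<mu> k) \<partial>\<mu>) \<le> 1 + \<eta>"
      using cov_abstract[of Pol "\<lambda>\<pi> k. occ M \<pi> h k" C \<mu> eps \<eta>] Pne occ_nn occ_le1 dom Cpos eps \<eta>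
      by blast
    have "Psi_mu M Pol h \<mu> eps p \<le> 1 + \<eta>"
      unfolding PsimuT
    proof (rule cSUP_least[OF Pne])
      fix \<pi> assume \<pi>P: "\<pi> \<in> Pol"
      have "T2 eps p \<pi> = integral\<^sup>L (count_space UNIV)
          (\<lambda>k. pmf (sa_dist M \<pi> h) k * (pmf \<mu> k / (occ_mix M p h k + eps * C * pmf \<mu> k)))"
        unfolding T2_def expect_h_def by (rule pmf_integral_count)
      also have "\<dots> = integral\<^sup>L (count_space UNIV)
          (\<lambda>k. pmf \<mu> k * (occ M \<pi> h k / (occ_mix M p h k + eps * C * pmf \<mu> k)))"
        by (simp add: occ_def mult.commute)
      also have "\<dots> = (\<integral>k. occ M \<pi> h k / (occ_mix M p h k + eps * C * pmf \<mu> k) \<partial>\<mu>)"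
        by (rule pmf_integral_count[symmetric])
      also have "\<dots> \<le> 1 + \<eta>" using pb \<pi>P by (simp add: occ_mix_def)
      finally show "T2 eps p \<pi> \<le> 1 + \<eta>" .
    qed
    moreover have "Cov_mu M Pol h \<mu> eps \<le> Psi_mu M Pol h \<mu> eps p"
      unfolding Cov_mu_def
      by (rule cINF_lower) (use pS Psimu_nn[OF eps] in \<open>auto intro!: bdd_belowI\<close>)
    ultimately show "Cov_mu M Pol h \<mu> eps \<le> 1 + \<eta>" by linarith
  qed
  show ?thesis using part1 part2 unfolding C_def by blast
qed

end
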